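(* Let $({\rm X},{\sf d},\mathfrak m)$ be a metric measure space and $q\in[1,\infty]$. Let $b\in{\rm Der}^q({\rm X})$. Then one can write $b=a+c$, where $c$ is a cycle and $a\in{\rm Der}^q({\rm X})$ is an acyclic subderivation of $b$.
   Context: A metric measure space is a complete separable metric space $({\rm X},{\sf d})$ with a nonnegative Borel measure $\mathfrak m$ finite on bounded Borel sets. ${\rm LIP}_{bs}({\rm X})$ denotes bounded Lipschitz functions with bounded support, and for Lipschitz $f$, ${\rm lip}_a(f)(x)=\limsup_{y,z\to x,\,y\ne z}|f(y)-f(z)|/{\sf d}(y,z)$ at non-isolated $x$ (and $0$ at isolated points). A Lipschitz $q$-derivation is a linear map $b\colon{\rm LIP}_{bs}({\rm X})\to L^q(\mathfrak m)$ satisfying $b(fg)=f\,b(g)+g\,b(f)$ and such that for some $g\in L^q(\mathfrak m)^+$ one has $|b(f)|\le g\,{\rm lip}_a(f)$ $\mathfrak m$-a.e. for every $f\in{\rm LIP}_{bs}({\rm X})$; the $\mathfrak m$-a.e. smallest such $g$ is denoted $|b|$. ${\rm Der}^q({\rm X})$ is the space of these derivations (a module over $L^\infty(\mathfrak m)$ with pointwise operations). A boundedly-finite signed Borel measure is a map $\mu$ on bounded Borel sets whose restriction to each bounded Borel set is a finite signed Borel measure. A derivation $b$ has divergence ${\bf div}(b)=\mu$ (such a measure) if $\int b(f)\,d\mathfrak m=-\int f\,d\mu$ for all $f\in{\rm LIP}_{bs}({\rm X})$. A derivation $s\in{\rm Der}^q({\rm X})$ is a subderivation of $b$ if $|b-s|+|s|\le|b|$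 $\mathfrak m$-a.e. A cycle is a derivation $c$ having divergence with ${\bf div}(c)=0$; a subcycle of $b$ is a cycle that is a subderivation of $b$; $b$ is acyclic if its only subcycle is $0$. *)

theory Defs
  imports "HOL-Analysis.Analysis"
begin

definition mms :: "'a::polish_space measure \<Rightarrow> bool" where
  "mms m \<longleftrightarrow> sets m = sets borel \<and>
     (\<forall>B. B \<in> sets borel \<and> bounded B \<longrightarrow> emeasure m B < \<infinity>)"

text \<open>Membership in L^q(m), q in [1,infinity]; q = top encodes q = infinity.\<close>
definition Lq :: "'a measure \<Rightarrow> ennreal \<Rightarrow> ('a \<Rightarrow> real) \<Rightarrow> bool" where
  "Lq m q g \<longleftrightarrow> g \<in> borel_measurable m \<and>
     (if q = top then (\<exists>C. AE x in m. \<bar>g x\<bar> \<le> C)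
      else (\<integral>\<^sup>+ x. ennreal (\<bar>g x\<bar> powr enn2real q) \<partial>m) < \<infinity>)"

definition lip_bs :: "('a::metric_space \<Rightarrow> real) \<Rightarrow> bool" where
  "lip_bs f \<longleftrightarrow> (\<exists>L. L-lipschitz_on UNIV f) \<and> bounded (range f) \<and> bounded {x. f x \<noteq> 0}"

text \<open>Asymptotic Lipschitz constant: limsup of difference quotients as y,z tend to x
  (y \<noteq> z), i.e. inf over r > 0 of the Lipschitz constant on the ball B(x,r);
  0 at isolated points.\<close>
definition lip_a :: "('a::metric_space \<Rightarrow> real) \<Rightarrow> 'a \<Rightarrow> real" where
  "lip_a f x = (if x islimpt UNIV then
     Inf ((\<lambda>r. Sup {\<bar>f y - f z\<bar> / dist y z | y z. y \<in> ball x r \<and> z \<in> ball x r \<and> y \<noteq> z}) ` {0<..})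
   else 0)"

definition der_eq :: "'a::metric_space measure \<Rightarrow> (('a \<Rightarrow> real) \<Rightarrow> 'a \<Rightarrow> real)
   \<Rightarrow> (('a \<Rightarrow> real) \<Rightarrow> 'a \<Rightarrow> real) \<Rightarrow> bool" where
  "der_eq m b b' \<longleftrightarrow> (\<forall>f. lip_bs f \<longrightarrow> (AE x in m. b f x = b' f x))"

definition der_bound :: "'a::metric_space measure \<Rightarrow> ennreal \<Rightarrow> (('a \<Rightarrow> real) \<Rightarrow> 'a \<Rightarrow> real)
   \<Rightarrow> ('a \<Rightarrow> real) \<Rightarrow> bool" where
  "der_bound m q b g \<longleftrightarrow> Lq m q g \<and> (AE x in m. g x \<ge> 0) \<and>
     (\<forall>f. lip_bs f \<longrightarrow> (AE x in m. \<bar>b f x\<bar> \<le> g x * lip_a f x))"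

definition is_derivation :: "'a::metric_space measure \<Rightarrow> ennreal
   \<Rightarrow> (('a \<Rightarrow> real) \<Rightarrow> 'a \<Rightarrow> real) \<Rightarrow> bool" where
  "is_derivation m q b \<longleftrightarrow>
     (\<forall>f. lip_bs f \<longrightarrow> Lq m q (b f)) \<and>
     (\<forall>f g. lip_bs f \<longrightarrow> lip_bs g \<longrightarrow> (AE x in m. b (\<lambda>y. f y + g y) x = b f x + b g x)) \<and>
     (\<forall>f (c::real). lip_bs f \<longrightarrow> (AE x in m. b (\<lambda>y. c * f y) x = c * b f x)) \<and>
     (\<forall>f g. lip_bs f \<longrightarrow> lip_bs g \<longrightarrow>
        (AE x in m. b (\<lambda>y. f y * g y) x = f x * b g x + g x * b f x)) \<and>
     (\<exists>g. der_bound m q b g)"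

definition is_der_norm :: "'a::metric_space measure \<Rightarrow> ennreal \<Rightarrow> (('a \<Rightarrow> real) \<Rightarrow> 'a \<Rightarrow> real)
   \<Rightarrow> ('a \<Rightarrow> real) \<Rightarrow> bool" where
  "is_der_norm m q b G \<longleftrightarrow> der_bound m q b G \<and>
     (\<forall>g. der_bound m q b g \<longrightarrow> (AE x in m. G x \<le> g x))"

definition der_norm :: "'a::metric_space measure \<Rightarrow> ennreal \<Rightarrow> (('a \<Rightarrow> real) \<Rightarrow> 'a \<Rightarrow> real)
   \<Rightarrow> 'a \<Rightarrow> real" where
  "der_norm m q b = (SOME G. is_der_norm m q b G)"

definition der_diff :: "(('a \<Rightarrow> real) \<Rightarrow> 'a \<Rightarrow> real) \<Rightarrow> (('a \<Rightarrow> real) \<Rightarrow> 'a \<Rightarrow> real)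
   \<Rightarrow> ('a \<Rightarrow> real) \<Rightarrow> 'a \<Rightarrow> real" where
  "der_diff b s = (\<lambda>f x. b f x - s f x)"

definition der_add :: "(('a \<Rightarrow> real) \<Rightarrow> 'a \<Rightarrow> real) \<Rightarrow> (('a \<Rightarrow> real) \<Rightarrow> 'a \<Rightarrow> real)
   \<Rightarrow> ('a \<Rightarrow> real) \<Rightarrow> 'a \<Rightarrow> real" where
  "der_add b s = (\<lambda>f x. b f x + s f x)"

definition subderivation :: "'a::metric_space measure \<Rightarrow> ennreal
   \<Rightarrow> (('a \<Rightarrow> real) \<Rightarrow> 'a \<Rightarrow> real) \<Rightarrow> (('a \<Rightarrow> real) \<Rightarrow> 'a \<Rightarrow> real) \<Rightarrow> bool" where
  "subderivation m q s b \<longleftrightarrow> is_derivation m q s \<and>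
     (AE x in m. der_norm m q (der_diff b s) x + der_norm m q s x \<le> der_norm m q b x)"

text \<open>b has divergence equal to the zero measure: int b(f) dm = - int f d0 = 0
  for all f in LIP_bs (b(f) being m-integrable).\<close>
definition zero_divergence :: "'a::metric_space measure \<Rightarrow> (('a \<Rightarrow> real) \<Rightarrow> 'a \<Rightarrow> real) \<Rightarrow> bool" where
  "zero_divergence m b \<longleftrightarrow> (\<forall>f. lip_bs f \<longrightarrow> integrable m (b f) \<and> integral\<^sup>L m (b f) = 0)"

definition is_cycle :: "'a::metric_space measure \<Rightarrow> ennreal \<Rightarrow> (('a \<Rightarrow> real) \<Rightarrow> 'a \<Rightarrow> real) \<Rightarrow> bool" where
  "is_cycle m q c \<longleftrightarrow> is_derivation m q c \<and> zero_divergence m c"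

definition acyclic_der :: "'a::metric_space measure \<Rightarrow> ennreal \<Rightarrow> (('a \<Rightarrow> real) \<Rightarrow> 'a \<Rightarrow> real) \<Rightarrow> bool" where
  "acyclic_der m q b \<longleftrightarrow>
     (\<forall>c. is_cycle m q c \<and> subderivation m q c b \<longrightarrow> der_eq m c (\<lambda>f x. 0))"

end

theory Submission
  imports Defs
begin

locale mmsq =
  fixes m :: "'a::polish_space measure" and q :: ennreal
  assumes mms: "mms m" and q1: "1 \<le> q"
begin

lemma sets_m[measurable_cong]: "sets m = sets borel"
  using mms by (simp add: mms_def)

lemma space_m[simp]: "space m = UNIV"
  using sets_eq_imp_space_eq[OF sets_m] by simp

lemma meas_m[simp]: "measurable m N = measurable borel N"
  by (rule measurable_cong_sets[OF sets_m refl])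

lemma emeasure_bdd: "bounded B \<Longrightarrow> B \<in> sets borel \<Longrightarrow> emeasure m B < \<infinity>"
  using mms by (simp add: mms_def)

lemma sigma_fin: "sigma_finite_measure m"
  unfolding sigma_finite_measure_def
proof (intro exI[of _ "range (\<lambda>n::nat. ball undefined (real n))"] conjI)
  show "range (\<lambda>n::nat. ball undefined (real n)) \<subseteq> sets m" by (auto simp: sets_m)
  show "\<Union> (range (\<lambda>n::nat. ball undefined (real n))) = space m"
  proof -
    have "x \<in> \<Union> (range (\<lambda>n::nat. ball undefined (real n)))" for x :: 'a
    proof -
      obtain n :: nat where "dist undefined x < real n" using reals_Archimedean2 by blast
      then show ?thesis by auto
    qed
    then show ?thesis by (simp add: set_eq_iff)
  qed
  show "\<forall>a\<in>range (\<lambda>n::nat. ball undefined (real n)). emeasure m a \<noteq> \<infinity>"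
  proof safe
    fix n :: nat assume "emeasure m (ball undefined (real n)) = \<infinity>"
    then show False using emeasure_bdd[of "ball undefined (real n)"] by auto
  qed
qed auto

lemma weight_ex: "\<exists>h. h \<in> borel_measurable borel \<and> integral\<^sup>N m h \<noteq> \<infinity> \<and> (\<forall>x. 0 < h x \<and> h x < \<infinity>)"
proof -
  interpret sigma_finite_measure m by (rule sigma_fin)
  show ?thesis using Ex_finite_integrable_function by (simp add: Bex_def)
qed

lemma weight: obtains w :: "'a \<Rightarrow> real" where "integrable m w" "\<And>x. 0 < w x" "w \<in> borel_measurable borel"
proof -
  obtain h where hm: "h \<in> borel_measurable borel" and h2: "integral\<^sup>N m h \<noteq> \<infinity>"
    and h3: "\<And>x. 0 < h x" and h4: "\<And>x. h x < \<infinity>"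
    using weight_ex by blast
  have int: "integrable m (\<lambda>x. enn2real (h x))"
  proof (rule integrableI_nonneg)
    show "(\<lambda>x. enn2real (h x)) \<in> borel_measurable m" using hm by simp
    show "AE x in m. 0 \<le> enn2real (h x)" by simp
    have "(\<integral>\<^sup>+ x. ennreal (enn2real (h x)) \<partial>m) = integral\<^sup>N m h"
    proof (intro nn_integral_cong)
      fix x have "h x < top" using h4 by auto
      then have "h x \<noteq> top" by simp
      then show "ennreal (enn2real (h x)) = h x" by (simp add: ennreal_enn2real_if)
    qed
    then show "(\<integral>\<^sup>+ x. ennreal (enn2real (h x)) \<partial>m) < \<infinity>" using h2 by (simp add: less_top)
  qed
  have pos: "0 < enn2real (h x)" for x using h3[of x] h4[of x] by (simp add: enn2real_positive_iff)
  have mm: "(\<lambda>x. enn2real (h x)) \<in> borel_measurable borel" using hm by simp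
  show ?thesis by (rule that[of "\<lambda>x. enn2real (h x)", OF int pos mm])
qed

definition p :: real where "p = enn2real q"

lemma p_ge1: "q \<noteq> top \<Longrightarrow> 1 \<le> p"
proof -
  assume "q \<noteq> top" then have "q < top" by (simp add: less_top)
  then show ?thesis unfolding p_def using enn2real_mono[OF q1] by simp
qed

lemma Lq_fin: "q \<noteq> top \<Longrightarrow> Lq m q g \<longleftrightarrow> g \<in> borel_measurable borel \<and>
   (\<integral>\<^sup>+ x. ennreal (\<bar>g x\<bar> powr p) \<partial>m) < \<infinity>"
  by (simp add: Lq_def p_def)

lemma Lq_top: "q = top \<Longrightarrow> Lq m q g \<longleftrightarrow> g \<in> borel_measurable borel \<and> (\<exists>C. AE x in m. \<bar>g x\<bar> \<le> C)"
  by (simp add: Lq_def)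

lemma Lq_meas: "Lq m q g \<Longrightarrow> g \<in> borel_measurable borel"
  by (simp add: Lq_def)

lemma Lq_mono:
  assumes "Lq m q g" "h \<in> borel_measurable borel" "AE x in m. \<bar>h x\<bar> \<le> \<bar>g x\<bar>"
  shows "Lq m q h"
proof (cases "q = top")
  case True
  then obtain C where "AE x in m. \<bar>g x\<bar> \<le> C" using assms(1) unfolding Lq_top[OF True] by blast
  with assms(3) have "AE x in m. \<bar>h x\<bar> \<le> C" by eventually_elim auto
  then show ?thesis unfolding Lq_top[OF True] using assms(2) by blast
next
  case False
  have p0: "0 \<le> p" using p_ge1[OF False] by simp
  have "(\<integral>\<^sup>+ x. ennreal (\<bar>h x\<bar> powr p) \<partial>m) \<le> (\<integral>\<^sup>+ x. ennreal (\<bar>g x\<bar> powr p) \<partial>m)"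
    using assms(3)
  proof (intro nn_integral_mono_AE, eventually_elim)
    fix x assume "\<bar>h x\<bar> \<le> \<bar>g x\<bar>"
    then have "\<bar>h x\<bar> powr p \<le> \<bar>g x\<bar> powr p" by (intro powr_mono2 p0) auto
    then show "ennreal (\<bar>h x\<bar> powr p) \<le> ennreal (\<bar>g x\<bar> powr p)" by (rule ennreal_leI)
  qed
  also have "\<dots> < \<infinity>" using assms(1) unfolding Lq_fin[OF False] by blast
  finally show ?thesis unfolding Lq_fin[OF False] using assms(2) by blast
qed

lemma Lq_zero: "Lq m q (\<lambda>x. 0)"
proof (cases "q = top")
  case True
  have "AE x in m. \<bar>(0::real)\<bar> \<le> 0" by simp
  then show ?thesis unfolding Lq_top[OF True] by (intro conjI) (simp, blast)
next
  case False then show ?thesis unfolding Lq_fin[OF False] by simp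
qed

lemma Lq_add:
  assumes "Lq m q g1" "Lq m q g2"
  shows "Lq m q (\<lambda>x. g1 x + g2 x)"
proof (cases "q = top")
  case True
  then obtain C1 C2 where "AE x in m. \<bar>g1 x\<bar> \<le> C1" "AE x in m. \<bar>g2 x\<bar> \<le> C2"
    using assms unfolding Lq_top[OF True] by blast
  then have "AE x in m. \<bar>g1 x + g2 x\<bar> \<le> C1 + C2" by eventually_elim auto
  moreover have "(\<lambda>x. g1 x + g2 x) \<in> borel_measurable borel" using assms Lq_meas by auto
  ultimately show ?thesis unfolding Lq_top[OF True] by blast
next
  case False
  have p0: "0 \<le> p" using p_ge1[OF False] by simp
  have gm: "g1 \<in> borel_measurable borel" "g2 \<in> borel_measurable borel" using assms Lq_meas by auto
  have pt: "\<bar>g1 x + g2 x\<bar> powr p \<le> 2 powr p * (\<bar>g1 x\<bar> powr p + \<bar>g2 x\<bar> powr p)" for x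
  proof -
    define M where "M = max \<bar>g1 x\<bar> \<bar>g2 x\<bar>"
    have "\<bar>g1 x + g2 x\<bar> \<le> 2 * M" unfolding M_def by auto
    then have "\<bar>g1 x + g2 x\<bar> powr p \<le> (2 * M) powr p" by (intro powr_mono2 p0) auto
    also have "\<dots> = 2 powr p * M powr p" by (simp add: M_def powr_mult)
    finally have a: "\<bar>g1 x + g2 x\<bar> powr p \<le> 2 powr p * M powr p" .
    have "M powr p \<le> \<bar>g1 x\<bar> powr p + \<bar>g2 x\<bar> powr p" unfolding M_def by (auto simp: max_def)
    then have "2 powr p * M powr p \<le> 2 powr p * (\<bar>g1 x\<bar> powr p + \<bar>g2 x\<bar> powr p)"
      by (rule mult_left_mono) simp
    with a show ?thesis by linarith
  qed
  have "(\<integral>\<^sup>+ x. ennreal (\<bar>g1 x + g2 x\<bar> powr p) \<partial>m) \<le>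
        (\<integral>\<^sup>+ x. ennreal (2 powr p) * (ennreal (\<bar>g1 x\<bar> powr p) + ennreal (\<bar>g2 x\<bar> powr p)) \<partial>m)"
  proof (intro nn_integral_mono)
    fix x
    have "ennreal (\<bar>g1 x + g2 x\<bar> powr p) \<le> ennreal (2 powr p * (\<bar>g1 x\<bar> powr p + \<bar>g2 x\<bar> powr p))"
      using pt by (rule ennreal_leI)
    also have "\<dots> = ennreal (2 powr p) * (ennreal (\<bar>g1 x\<bar> powr p) + ennreal (\<bar>g2 x\<bar> powr p))"
      by (simp add: ennreal_mult ennreal_plus)
    finally show "ennreal (\<bar>g1 x + g2 x\<bar> powr p) \<le> ennreal (2 powr p) * (ennreal (\<bar>g1 x\<bar> powr p) + ennreal (\<bar>g2 x\<bar> powr p))" .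
  qed
  also have "\<dots> = ennreal (2 powr p) * ((\<integral>\<^sup>+ x. ennreal (\<bar>g1 x\<bar> powr p) \<partial>m) + (\<integral>\<^sup>+ x. ennreal (\<bar>g2 x\<bar> powr p) \<partial>m))"
    using gm by (simp add: nn_integral_cmult nn_integral_add)
  also have "\<dots> < \<infinity>" using assms unfolding Lq_fin[OF False] by (simp add: ennreal_mult_less_top)
  finally have "(\<integral>\<^sup>+ x. ennreal (\<bar>g1 x + g2 x\<bar> powr p) \<partial>m) < \<infinity>" .
  moreover have "(\<lambda>x. g1 x + g2 x) \<in> borel_measurable borel" using gm by simp
  ultimately show ?thesis unfolding Lq_fin[OF False] by blast
qed

lemma Lq_cmult:
  assumes "Lq m q g"
  shows "Lq m q (\<lambda>x. c * g x)"
proof (cases "q = top")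
  case True
  then obtain C where "AE x in m. \<bar>g x\<bar> \<le> C" using assms unfolding Lq_top[OF True] by blast
  then have "AE x in m. \<bar>c * g x\<bar> \<le> \<bar>c\<bar> * C" by eventually_elim (auto simp: abs_mult mult_left_mono)
  moreover have "(\<lambda>x. c * g x) \<in> borel_measurable borel" using assms Lq_meas by auto
  ultimately show ?thesis unfolding Lq_top[OF True] by blast
next
  case False
  have gm: "g \<in> borel_measurable borel" using assms Lq_meas by auto
  have "(\<integral>\<^sup>+ x. ennreal (\<bar>c * g x\<bar> powr p) \<partial>m) = (\<integral>\<^sup>+ x. ennreal (\<bar>c\<bar> powr p) * ennreal (\<bar>g x\<bar> powr p) \<partial>m)"
    by (intro nn_integral_cong) (simp add: abs_mult powr_mult ennreal_mult)
  also have "\<dots> = ennreal (\<bar>c\<bar> powr p) * (\<integral>\<^sup>+ x. ennreal (\<bar>g x\<bar> powr p) \<partial>m)"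
    using gm by (simp add: nn_integral_cmult)
  also have "\<dots> < \<infinity>" using assms unfolding Lq_fin[OF False] by (simp add: ennreal_mult_less_top)
  finally have "(\<integral>\<^sup>+ x. ennreal (\<bar>c * g x\<bar> powr p) \<partial>m) < \<infinity>" .
  moreover have "(\<lambda>x. c * g x) \<in> borel_measurable borel" using gm by simp
  ultimately show ?thesis unfolding Lq_fin[OF False] by blast
qed

lemma Lq_integrable:
  assumes "Lq m q g" "B \<in> sets borel" "emeasure m B < \<infinity>"
  shows "integrable m (\<lambda>x. g x * indicator B x)"
proof -
  have gm: "g \<in> borel_measurable borel" using assms Lq_meas by auto
  have Bm: "B \<in> sets m" using assms by (simp add: sets_m)
  show ?thesis
  proof (cases "q = top")
    case True
    then obtain C where C: "AE x in m. \<bar>g x\<bar> \<le> C" using assms unfolding Lq_top[OF True] by blast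
    have i: "integrable m (\<lambda>x. indicator B x *\<^sub>R C)" using Bm assms(3) by simp
    have "(\<lambda>x. g x * indicator B x) \<in> borel_measurable m" using gm assms(2) by simp
    moreover have "AE x in m. norm (g x * indicator B x) \<le> norm (indicator B x *\<^sub>R C)"
        using C by eventually_elim (auto simp: indicator_def)
    ultimately show ?thesis by (rule Bochner_Integration.integrable_bound[OF i])
  next
    case False
    have p1: "1 \<le> p" using p_ge1[OF False] .
    have i1: "integrable m (\<lambda>x. \<bar>g x\<bar> powr p)"
    proof (rule integrableI_nonneg)
      show "(\<lambda>x. \<bar>g x\<bar> powr p) \<in> borel_measurable m" using gm by simp
      show "AE x in m. 0 \<le> \<bar>g x\<bar> powr p" by simp
      show "(\<integral>\<^sup>+ x. ennreal (\<bar>g x\<bar> powr p) \<partial>m) < \<infinity>" using assms(1) unfolding Lq_fin[OF False] by blast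
    qed
    have i2: "integrable m (\<lambda>x. indicator B x + \<bar>g x\<bar> powr p)"
    proof -
      have "integrable m (indicator B :: _ \<Rightarrow> real)" using Bm assms(3) by (rule integrable_real_indicator)
      then show ?thesis using i1 by (rule Bochner_Integration.integrable_add)
    qed
    show ?thesis
    proof (rule Bochner_Integration.integrable_bound[OF i2])
      show "(\<lambda>x. g x * indicator B x) \<in> borel_measurable m" using gm assms(2) by simp
      have "\<bar>g x * indicator B x\<bar> \<le> \<bar>indicator B x + \<bar>g x\<bar> powr p\<bar>" for x
      proof (cases "x \<in> B")
        case True
        have "\<bar>g x\<bar> \<le> 1 + \<bar>g x\<bar> powr p"
        proof (cases "\<bar>g x\<bar> \<le> 1")
          case False
          then have "\<bar>g x\<bar> powr 1 \<le> \<bar>g x\<bar> powr p" by (intro powr_mono p1) auto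
          then show ?thesis using False by simp
        qed (simp add: add_increasing2)
        then show ?thesis using True by simp
      qed simp
      then show "AE x in m. norm (g x * indicator B x) \<le> norm (indicator B x + \<bar>g x\<bar> powr p)"
        by simp
    qed
  qed
qed

end

definition QS :: "('a::metric_space \<Rightarrow> real) \<Rightarrow> 'a \<Rightarrow> real \<Rightarrow> real set" where
  "QS f x r = {\<bar>f y - f z\<bar> / dist y z | y z. y \<in> ball x r \<and> z \<in> ball x r \<and> y \<noteq> z}"

definition supp1 :: "('a::metric_space \<Rightarrow> real) \<Rightarrow> 'a set" where
  "supp1 f = {x. \<exists>y. f y \<noteq> 0 \<and> dist x y < 1}"

lemma lip_a_QS: "lip_a f x = (if x islimpt UNIV then Inf ((\<lambda>r. Sup (QS f x r)) ` {0<..}) else 0)"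
  by (simp add: lip_a_def QS_def)

lemma lip_bs_L:
  assumes "lip_bs f"
  obtains L where "0 \<le> L" "\<And>y z. \<bar>f y - f z\<bar> \<le> L * dist y z"
  using assms unfolding lip_bs_def lipschitz_on_def dist_real_def by blast

lemma QS_props:
  assumes "\<And>y z. \<bar>f y - f z\<bar> \<le> L * dist y z" "v \<in> QS f x r"
  shows "0 \<le> v \<and> v \<le> L"
proof -
  obtain y z where v: "v = \<bar>f y - f z\<bar> / dist y z" "y \<noteq> z" using assms(2) unfolding QS_def by blast
  then have "0 < dist y z" by simp
  then show ?thesis using v assms(1)[of y z] by (simp add: divide_le_eq)
qed

lemma QS_ne:
  assumes "x islimpt UNIV" "0 < r"
  shows "QS f x r \<noteq> {}"
proof -
  obtain y where "y \<noteq> x" "dist y x < r" using assms unfolding islimpt_approachable by blast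
  then have "\<bar>f y - f x\<bar> / dist y x \<in> QS f x r" unfolding QS_def mem_Collect_eq
    by (rule_tac exI[of _ y], rule_tac exI[of _ x]) (use assms(2) in \<open>simp add: dist_commute\<close>)
  then show ?thesis by blast
qed

lemma lip_a_bounds:
  assumes "lip_bs f"
  obtains L where "0 \<le> L" "\<And>x. 0 \<le> lip_a f x" "\<And>x. lip_a f x \<le> L"
    "\<And>x. x \<notin> supp1 f \<Longrightarrow> lip_a f x = 0"
proof -
  obtain L where L: "0 \<le> L" "\<And>y z. \<bar>f y - f z\<bar> \<le> L * dist y z" using lip_bs_L assms by blast
  have main: "0 \<le> lip_a f x \<and> lip_a f x \<le> L \<and> (x \<notin> supp1 f \<longrightarrow> lip_a f x \<le> 0)" for x
  proof (cases "x islimpt UNIV")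
    case True
    have S: "0 \<le> Sup (QS f x r) \<and> Sup (QS f x r) \<le> L" if "0 < r" for r
    proof -
      have ne: "QS f x r \<noteq> {}" using QS_ne True that by blast
      have bdd: "bdd_above (QS f x r)" by (rule bdd_aboveI[of _ L]) (use QS_props[OF L(2)] in blast)
      obtain v where v: "v \<in> QS f x r" using ne by blast
      have "0 \<le> v" using QS_props[OF L(2) v] by simp
      also have "v \<le> Sup (QS f x r)" using cSup_upper[OF v bdd] .
      finally have "0 \<le> Sup (QS f x r)" .
      moreover have "Sup (QS f x r) \<le> L" by (rule cSup_least[OF ne]) (use QS_props[OF L(2)] in blast)
      ultimately show ?thesis by (rule conjI)
    qed
    define V where "V = (\<lambda>r. Sup (QS f x r)) ` {0<..}"
    have 1: "Sup (QS f x 1) \<in> V" unfolding V_def by (rule imageI) simp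
    have Vne: "V \<noteq> {}" using 1 by blast
    have V0: "0 \<le> v" if "v \<in> V" for v
    proof -
      obtain r where "0 < r" "v = Sup (QS f x r)" using \<open>v \<in> V\<close> unfolding V_def by auto
      then show ?thesis using S by blast
    qed
    have Vb: "bdd_below V" by (rule bdd_belowI[of _ 0]) (rule V0)
    have lv: "lip_a f x = Inf V" using True by (simp add: lip_a_QS V_def)
    have "0 \<le> Inf V" using Vne by (rule cInf_greatest) (rule V0)
    moreover have "Inf V \<le> Sup (QS f x 1)" using cInf_lower[OF 1 Vb] .
    moreover have "Sup (QS f x 1) \<le> 0" if "x \<notin> supp1 f"
    proof (rule cSup_least)
      show "QS f x 1 \<noteq> {}" using QS_ne[OF True zero_less_one] .
      fix v assume "v \<in> QS f x 1"
      then obtain y z where yz: "v = \<bar>f y - f z\<bar> / dist y z" "y \<in> ball x 1" "z \<in> ball x 1"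
        unfolding QS_def by blast
      have "f y = 0" using that yz(2) unfolding supp1_def mem_Collect_eq mem_ball by blast
      moreover have "f z = 0" using that yz(3) unfolding supp1_def mem_Collect_eq mem_ball by blast
      ultimately show "v \<le> 0" using yz(1) by simp
    qed
    moreover have S1: "0 \<le> Sup (QS f x 1) \<and> Sup (QS f x 1) \<le> L" using S[OF zero_less_one] .
    ultimately show ?thesis unfolding lv by (intro conjI impI) linarith+
  next
    case False
    then have "lip_a f x = 0" by (simp add: lip_a_QS)
    then show ?thesis using L(1) by simp
  qed
  show ?thesis
  proof (rule that[OF L(1)])
    fix x show "0 \<le> lip_a f x" using main[of x] by blast
    show "lip_a f x \<le> L" using main[of x] by blast
    assume "x \<notin> supp1 f" then show "lip_a f x = 0" using main[of x] by linarith
  qed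
qed

lemma supp1_bounded: "lip_bs f \<Longrightarrow> bounded (supp1 f)"
proof -
  assume "lip_bs f"
  then have "bounded {x. f x \<noteq> 0}" by (simp add: lip_bs_def)
  then obtain a e where ae: "\<And>y. f y \<noteq> 0 \<Longrightarrow> dist a y \<le> e" unfolding bounded_def by blast
  have H: "dist a x \<le> e + 1" if "x \<in> supp1 f" for x
  proof -
    have "\<exists>y. f y \<noteq> 0 \<and> dist x y < 1" using that unfolding supp1_def mem_Collect_eq .
    then obtain y where y: "f y \<noteq> 0" "dist x y < 1" by blast
    have "dist a y \<le> e" using ae[OF y(1)] .
    moreover have "dist y x < 1" using y(2) by (simp add: dist_commute)
    moreover have "dist a x \<le> dist a y + dist y x" by (rule dist_triangle)
    ultimately show ?thesis by linarith
  qed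
  have "\<forall>x\<in>supp1 f. dist a x \<le> e + 1" using H by (rule ballI)
  then have "\<exists>a e. \<forall>x\<in>supp1 f. dist a x \<le> e" by blast
  then show ?thesis unfolding bounded_def .
qed

lemma supp1_open: "open (supp1 f)"
proof -
  have "supp1 f = (\<Union>y\<in>{y. f y \<noteq> 0}. ball y 1)" unfolding supp1_def by (auto simp: dist_commute)
  then show ?thesis by auto
qed

context mmsq begin

abbreviation "Bd \<equiv> der_bound m q"
abbreviation "N \<equiv> der_norm m q"
abbreviation "D \<equiv> is_derivation m q"


lemma lip_a_ex: assumes "lip_bs f"
  shows "\<exists>L. 0 \<le> L \<and> (\<forall>x. 0 \<le> lip_a f x \<and> lip_a f x \<le> L \<and> (x \<notin> supp1 f \<longrightarrow> lip_a f x = 0))"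
proof (rule lip_a_bounds[OF assms])
  fix L assume "0 \<le> L" "\<And>x. 0 \<le> lip_a f x" "\<And>x. lip_a f x \<le> L"
    "\<And>x. x \<notin> supp1 f \<Longrightarrow> lip_a f x = 0"
  then show ?thesis by blast
qed

lemma lip_a_nn: assumes "lip_bs f" shows "0 \<le> lip_a f x"
  using lip_a_ex[OF assms] by blast

lemma bound_max0:
  assumes "Bd b g"
  shows "Bd b (\<lambda>x. max (g x) 0)"
  unfolding der_bound_def
proof (intro conjI allI impI)
  have gm: "g \<in> borel_measurable borel" using assms Lq_meas by (auto simp: der_bound_def)
  show "Lq m q (\<lambda>x. max (g x) 0)"
  proof (rule Lq_mono[of g])
    show "Lq m q g" using assms by (simp add: der_bound_def)
    show "(\<lambda>x. max (g x) 0) \<in> borel_measurable borel" using gm by simp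
    show "AE x in m. \<bar>max (g x) 0\<bar> \<le> \<bar>g x\<bar>" by (rule AE_I2) auto
  qed
  show "AE x in m. 0 \<le> max (g x) 0" by simp
  fix f :: "'a \<Rightarrow> real" assume f: "lip_bs f"
  have "AE x in m. \<bar>b f x\<bar> \<le> g x * lip_a f x" using assms f by (auto simp: der_bound_def)
  then show "AE x in m. \<bar>b f x\<bar> \<le> max (g x) 0 * lip_a f x"
  proof eventually_elim
    case (elim x)
    have "g x * lip_a f x \<le> max (g x) 0 * lip_a f x" using lip_a_nn[OF f] by (intro mult_right_mono) auto
    then show ?case using elim by linarith
  qed
qed

lemma bound_min:
  assumes "Bd b g1" "Bd b g2"
  shows "Bd b (\<lambda>x. min (g1 x) (g2 x))"
  unfolding der_bound_def
proof (intro conjI allI impI)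
  have gm: "g1 \<in> borel_measurable borel" "g2 \<in> borel_measurable borel"
    using assms Lq_meas by (auto simp: der_bound_def)
  have nn: "AE x in m. 0 \<le> g1 x" "AE x in m. 0 \<le> g2 x" using assms by (auto simp: der_bound_def)
  show "Lq m q (\<lambda>x. min (g1 x) (g2 x))"
  proof (rule Lq_mono[of g1])
    show "Lq m q g1" using assms by (auto simp: der_bound_def)
    show "(\<lambda>x. min (g1 x) (g2 x)) \<in> borel_measurable borel" using gm by simp
    show "AE x in m. \<bar>min (g1 x) (g2 x)\<bar> \<le> \<bar>g1 x\<bar>" using nn by eventually_elim auto
  qed
  show "AE x in m. 0 \<le> min (g1 x) (g2 x)" using nn by eventually_elim auto
  fix f :: "'a \<Rightarrow> real" assume f: "lip_bs f"
  have "AE x in m. \<bar>b f x\<bar> \<le> g1 x * lip_a f x" "AE x in m. \<bar>b f x\<bar> \<le> g2 x * lip_a f x"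
    using assms f by (auto simp: der_bound_def)
  then show "AE x in m. \<bar>b f x\<bar> \<le> min (g1 x) (g2 x) * lip_a f x"
    by eventually_elim (auto simp: min_def)
qed

lemma exists_norm:
  assumes g0: "Bd b g0"
  shows "\<exists>G. is_der_norm m q b G"
proof -
  obtain w :: "'a \<Rightarrow> real" where w: "integrable m w" "\<And>x. 0 < w x" "w \<in> borel_measurable borel"
    using weight by blast
  note wm[measurable] = w(3)
  define F where "F = {g. Bd b g \<and> (\<forall>x. 0 \<le> g x)}"
  define \<Phi> where "\<Phi> g = integral\<^sup>L m (\<lambda>x. arctan (g x) * w x)" for g
  have Fm: "g \<in> borel_measurable borel" if "g \<in> F" for g
    using that Lq_meas by (auto simp: F_def der_bound_def)
  have intA: "integrable m (\<lambda>x. arctan (g x) * w x)" if gm[measurable]: "g \<in> borel_measurable borel" for g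
  proof -
    have i: "integrable m (\<lambda>x. pi / 2 * w x)" using w(1) by simp
    have "(\<lambda>x. arctan (g x) * w x) \<in> borel_measurable borel" by measurable
    then have "(\<lambda>x. arctan (g x) * w x) \<in> borel_measurable m" by simp
    moreover have "AE x in m. norm (arctan (g x) * w x) \<le> norm (pi / 2 * w x)"
    proof (rule AE_I2)
      fix x
      have "\<bar>arctan (g x)\<bar> \<le> pi / 2" using arctan_bounded[of "g x"] by linarith
      then have "\<bar>arctan (g x)\<bar> * w x \<le> pi / 2 * w x" using w(2)[of x] by (intro mult_right_mono) auto
      then show "norm (arctan (g x) * w x) \<le> norm (pi / 2 * w x)" using w(2)[of x] by (simp add: abs_mult)
    qed
    ultimately show ?thesis by (rule Bochner_Integration.integrable_bound[OF i])
  qed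
  have \<Phi>_mono: "\<Phi> g1 \<le> \<Phi> g2" if "g1 \<in> borel_measurable borel" "g2 \<in> borel_measurable borel"
      "\<And>x. g1 x \<le> g2 x" for g1 g2
    unfolding \<Phi>_def
  proof (rule integral_mono)
    show "integrable m (\<lambda>x. arctan (g1 x) * w x)" "integrable m (\<lambda>x. arctan (g2 x) * w x)"
      using intA that by auto
    fix x show "arctan (g1 x) * w x \<le> arctan (g2 x) * w x"
      using that(3)[of x] w(2)[of x] by (intro mult_right_mono) (auto simp: arctan_le_iff)
  qed
  have \<Phi>_nn: "0 \<le> \<Phi> g" if "g \<in> F" for g
    unfolding \<Phi>_def
  proof (rule integral_nonneg_AE, rule AE_I2)
    fix x
    have "0 \<le> g x" using that by (simp add: F_def)
    then have "0 \<le> arctan (g x)" by simp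
    then show "0 \<le> arctan (g x) * w x" using w(2)[of x] by simp
  qed
  have F_max: "(\<lambda>x. max (g x) 0) \<in> F" if "Bd b g" for g
    using bound_max0[OF that] by (simp add: F_def)
  have F_min: "(\<lambda>x. min (g1 x) (g2 x)) \<in> F" if "g1 \<in> F" "g2 \<in> F" for g1 g2
    using bound_min[of b g1 g2] that by (simp add: F_def)
  define I where "I = Inf (\<Phi> ` F)"
  have Fne: "\<Phi> ` F \<noteq> {}" using F_max[OF g0] by blast
  have Fbdd: "bdd_below (\<Phi> ` F)" using \<Phi>_nn by (intro bdd_belowI[of _ 0]) blast
  have "\<forall>n::nat. \<exists>g. g \<in> F \<and> \<Phi> g < I + 1 / real (Suc n)"
  proof
    fix n :: nat
    have "I < I + 1 / real (Suc n)" by simp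
    then obtain v where "v \<in> \<Phi> ` F" "v < I + 1 / real (Suc n)" using cInf_lessD[OF Fne] unfolding I_def by blast
    then show "\<exists>g. g \<in> F \<and> \<Phi> g < I + 1 / real (Suc n)" by blast
  qed
  then obtain gs where gs: "\<And>n. gs n \<in> F" "\<And>n. \<Phi> (gs n) < I + 1 / real (Suc n)"
    using choice[of "\<lambda>n g. g \<in> F \<and> \<Phi> g < I + 1 / real (Suc n)"] by blast
  define Gs where "Gs = rec_nat (gs 0) (\<lambda>n G x. min (G x) (gs (Suc n) x))"
  have Gs0: "Gs 0 = gs 0" and GsS: "Gs (Suc n) = (\<lambda>x. min (Gs n x) (gs (Suc n) x))" for n
    by (simp_all add: Gs_def)
  have GsF: "Gs n \<in> F" for n
    by (induction n) (auto simp: Gs0 GsS gs F_min)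
  have Gs_le: "Gs n x \<le> gs n x" for n x
    by (cases n) (auto simp: Gs0 GsS)
  have Gs_nn: "0 \<le> Gs n x" for n x using GsF[of n] by (simp add: F_def)
  have Gs_dec: "decseq (\<lambda>n. Gs n x)" for x
    by (rule decseq_SucI) (simp add: GsS)
  define G where "G x = (INF n. Gs n x)" for x
  have Gbdd: "bdd_below (range (\<lambda>n. Gs n x))" for x using Gs_nn by (intro bdd_belowI[of _ 0]) auto
  have Glim: "(\<lambda>n. Gs n x) \<longlonglongrightarrow> G x" for x
    unfolding G_def by (rule LIMSEQ_decseq_INF[OF Gbdd Gs_dec])
  have Gm: "G \<in> borel_measurable borel"
    using borel_measurable_LIMSEQ_real[of borel "\<lambda>n. Gs n" G] Glim Fm GsF by auto
  have G_nn: "0 \<le> G x" for x unfolding G_def by (rule cINF_greatest) (auto simp: Gs_nn)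
  have G_le: "G x \<le> Gs n x" for x n unfolding G_def by (rule cINF_lower[OF Gbdd]) simp
  have GF: "G \<in> F"
    unfolding F_def mem_Collect_eq der_bound_def
  proof (intro conjI allI impI)
    show "Lq m q G"
    proof (rule Lq_mono[of "gs 0"])
      show "Lq m q (gs 0)" using gs(1)[of 0] by (simp add: F_def der_bound_def)
      show "G \<in> borel_measurable borel" by (rule Gm)
      show "AE x in m. \<bar>G x\<bar> \<le> \<bar>gs 0 x\<bar>"
        using G_nn G_le[of _ 0] Gs_le[of 0] by (intro AE_I2) (smt (verit))
    qed
    show "AE x in m. 0 \<le> G x" using G_nn by simp
    show "0 \<le> G x" for x by (rule G_nn)
    fix f :: "'a \<Rightarrow> real" assume f: "lip_bs f"
    have "\<forall>n. AE x in m. \<bar>b f x\<bar> \<le> Gs n x * lip_a f x" using GsF f by (simp add: F_def der_bound_def)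
    then have "AE x in m. \<forall>n. \<bar>b f x\<bar> \<le> Gs n x * lip_a f x" by (simp add: AE_all_countable)
    then show "AE x in m. \<bar>b f x\<bar> \<le> G x * lip_a f x"
    proof eventually_elim
      case (elim x)
      have "(\<lambda>n. Gs n x * lip_a f x) \<longlonglongrightarrow> G x * lip_a f x" by (intro tendsto_mult_right Glim)
      then show ?case by (rule LIMSEQ_le_const) (use elim in blast)
    qed
  qed
  have \<Phi>G: "\<Phi> G \<le> I"
  proof (rule ccontr)
    assume "\<not> \<Phi> G \<le> I"
    then obtain n where n: "inverse (real (Suc n)) < \<Phi> G - I" using reals_Archimedean[of "\<Phi> G - I"] by auto
    have "\<Phi> G \<le> \<Phi> (Gs n)" using Gm Fm[OF GsF] G_le by (intro \<Phi>_mono) auto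
    also have "\<dots> \<le> \<Phi> (gs n)" using Fm[OF GsF] Fm[OF gs(1)] Gs_le by (intro \<Phi>_mono) auto
    also have "\<dots> < I + 1 / real (Suc n)" by (rule gs(2))
    finally show False using n by (simp add: inverse_eq_divide)
  qed
  have Gmin: "AE x in m. G x \<le> g x" if gb: "Bd b g" for g
  proof -
    define g' where "g' x = max (g x) 0" for x
    define H where "H x = min (G x) (g' x)" for x
    have g'F: "g' \<in> F" unfolding g'_def by (rule F_max[OF gb])
    have HF: "H \<in> F" unfolding H_def by (rule F_min[OF GF g'F])
    have "I \<le> \<Phi> H" unfolding I_def by (rule cInf_lower[OF _ Fbdd]) (use HF in blast)
    have intG: "integrable m (\<lambda>x. arctan (G x) * w x)" by (rule intA[OF Gm])
    have intH: "integrable m (\<lambda>x. arctan (H x) * w x)" by (rule intA[OF Fm[OF HF]])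
    have "integral\<^sup>L m (\<lambda>x. arctan (G x) * w x - arctan (H x) * w x) = \<Phi> G - \<Phi> H"
      unfolding \<Phi>_def by (rule Bochner_Integration.integral_diff[OF intG intH])
    also have "\<dots> \<le> 0" using \<Phi>G \<open>I \<le> \<Phi> H\<close> by simp
    finally have le0: "integral\<^sup>L m (\<lambda>x. arctan (G x) * w x - arctan (H x) * w x) \<le> 0" .
    have nnd: "AE x in m. 0 \<le> arctan (G x) * w x - arctan (H x) * w x"
    proof (rule AE_I2)
      fix x
      have "arctan (H x) \<le> arctan (G x)" by (simp add: H_def arctan_le_iff)
      then show "0 \<le> arctan (G x) * w x - arctan (H x) * w x"
        using w(2)[of x] by (simp add: mult_right_mono flip: left_diff_distrib)
    qed
    have intD: "integrable m (\<lambda>x. arctan (G x) * w x - arctan (H x) * w x)"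
      by (rule Bochner_Integration.integrable_diff[OF intG intH])
    have "integral\<^sup>L m (\<lambda>x. arctan (G x) * w x - arctan (H x) * w x) = 0"
      using le0 integral_nonneg_AE[OF nnd] by linarith
    then have "AE x in m. arctan (G x) * w x - arctan (H x) * w x = 0"
      using integral_nonneg_eq_0_iff_AE[OF intD nnd] by blast
    moreover have "AE x in m. 0 \<le> g x" using gb by (simp add: der_bound_def)
    ultimately show ?thesis
    proof eventually_elim
      case (elim x)
      then have "(arctan (G x) - arctan (H x)) * w x = 0" by (simp add: left_diff_distrib)
      then have "arctan (G x) = arctan (H x)" using w(2)[of x] by simp
      then have "G x = H x" by (simp add: arctan_eq_iff)
      then show ?case using elim by (simp add: H_def g'_def min_def max_def split: if_splits)
    qed
  qed
  have "is_der_norm m q b G"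
    unfolding is_der_norm_def using GF Gmin by (simp add: F_def)
  then show ?thesis by blast
qed

lemma N_is: assumes "Bd b g" shows "is_der_norm m q b (N b)"
  unfolding der_norm_def using exists_norm[OF assms] by (rule someI_ex)

end

context mmsq begin

lemma D_Bd: "D b \<Longrightarrow> \<exists>g. Bd b g"
  by (simp add: is_derivation_def)

lemma N_isD: "D b \<Longrightarrow> is_der_norm m q b (N b)"
  using D_Bd N_is by blast

lemma N_bd: "D b \<Longrightarrow> Bd b (N b)"
  using N_isD by (simp add: is_der_norm_def)

lemma N_min: "D b \<Longrightarrow> Bd b g \<Longrightarrow> AE x in m. N b x \<le> g x"
  using N_isD by (simp add: is_der_norm_def)

lemma N_nn: "D b \<Longrightarrow> AE x in m. 0 \<le> N b x"
  using N_bd by (simp add: der_bound_def)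

lemma N_Lq: "D b \<Longrightarrow> Lq m q (N b)"
  using N_bd by (simp add: der_bound_def)

lemma N_meas: "D b \<Longrightarrow> N b \<in> borel_measurable borel"
  using N_Lq Lq_meas by blast

lemma N_le: "D b \<Longrightarrow> lip_bs f \<Longrightarrow> AE x in m. \<bar>b f x\<bar> \<le> N b x * lip_a f x"
  using N_bd by (simp add: der_bound_def)

lemma D_Lq: "D b \<Longrightarrow> lip_bs f \<Longrightarrow> Lq m q (b f)"
  by (simp add: is_derivation_def)

lemma D_meas: "D b \<Longrightarrow> lip_bs f \<Longrightarrow> b f \<in> borel_measurable borel"
  using D_Lq Lq_meas by blast

lemma D_add_ax: "D b \<Longrightarrow> lip_bs f \<Longrightarrow> lip_bs g \<Longrightarrow> AE x in m. b (\<lambda>y. f y + g y) x = b f x + b g x"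
  by (simp add: is_derivation_def)
lemma D_mult_ax: "D b \<Longrightarrow> lip_bs f \<Longrightarrow> AE x in m. b (\<lambda>y. c * f y) x = c * b f x"
  by (simp add: is_derivation_def)
lemma D_leib_ax: "D b \<Longrightarrow> lip_bs f \<Longrightarrow> lip_bs g \<Longrightarrow>
   AE x in m. b (\<lambda>y. f y * g y) x = f x * b g x + g x * b f x"
  by (simp add: is_derivation_def)

lemma D_intro:
  assumes "\<And>f. lip_bs f \<Longrightarrow> Lq m q (b f)"
    "\<And>f g. lip_bs f \<Longrightarrow> lip_bs g \<Longrightarrow> AE x in m. b (\<lambda>y. f y + g y) x = b f x + b g x"
    "\<And>f c. lip_bs f \<Longrightarrow> AE x in m. b (\<lambda>y. c * f y) x = c * b f x"
    "\<And>f g. lip_bs f \<Longrightarrow> lip_bs g \<Longrightarrow> AE x in m. b (\<lambda>y. f y * g y) x = f x * b g x + g x * b f x"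
    "Bd b G"
  shows "D b"
  unfolding is_derivation_def using assms by blast

lemma Bd_intro:
  assumes "Lq m q G" "AE x in m. 0 \<le> G x"
    "\<And>f. lip_bs f \<Longrightarrow> AE x in m. \<bar>b f x\<bar> \<le> G x * lip_a f x"
  shows "Bd b G"
  unfolding der_bound_def using assms by blast

lemma Bd_add:
  assumes "Bd b g1" "Bd s g2"
  shows "Bd (der_add b s) (\<lambda>x. g1 x + g2 x)" "Bd (der_diff b s) (\<lambda>x. g1 x + g2 x)"
proof -
  have L: "Lq m q (\<lambda>x. g1 x + g2 x)" using assms by (intro Lq_add) (auto simp: der_bound_def)
  have P: "AE x in m. 0 \<le> g1 x + g2 x"
  proof -
    have "AE x in m. 0 \<le> g1 x" "AE x in m. 0 \<le> g2 x" using assms by (auto simp: der_bound_def)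
    then show ?thesis by eventually_elim simp
  qed
  have B: "AE x in m. \<bar>b f x\<bar> + \<bar>s f x\<bar> \<le> (g1 x + g2 x) * lip_a f x" if f: "lip_bs f" for f
  proof -
    have "AE x in m. \<bar>b f x\<bar> \<le> g1 x * lip_a f x" "AE x in m. \<bar>s f x\<bar> \<le> g2 x * lip_a f x"
      using assms f by (auto simp: der_bound_def)
    then show ?thesis by eventually_elim (simp add: distrib_right)
  qed
  show "Bd (der_add b s) (\<lambda>x. g1 x + g2 x)"
  proof (rule Bd_intro[OF L P])
    fix f :: "'a \<Rightarrow> real" assume "lip_bs f"
    from B[OF this] show "AE x in m. \<bar>der_add b s f x\<bar> \<le> (g1 x + g2 x) * lip_a f x"
      by eventually_elim (simp add: der_add_def)
  qed
  show "Bd (der_diff b s) (\<lambda>x. g1 x + g2 x)"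
  proof (rule Bd_intro[OF L P])
    fix f :: "'a \<Rightarrow> real" assume "lip_bs f"
    from B[OF this] show "AE x in m. \<bar>der_diff b s f x\<bar> \<le> (g1 x + g2 x) * lip_a f x"
      by eventually_elim (simp add: der_diff_def)
  qed
qed

lemma D_add: assumes "D b" "D s" shows "D (der_add b s)"
proof (rule D_intro)
  show "Bd (der_add b s) (\<lambda>x. N b x + N s x)" using Bd_add N_bd assms by blast
  fix f :: "'a \<Rightarrow> real" assume f: "lip_bs f"
  show "Lq m q (der_add b s f)" unfolding der_add_def using f assms by (intro Lq_add D_Lq)
  fix c :: real
  show "AE x in m. der_add b s (\<lambda>y. c * f y) x = c * der_add b s f x"
    using D_mult_ax[OF assms(1) f, of c] D_mult_ax[OF assms(2) f, of c]
    by eventually_elim (simp add: der_add_def algebra_simps)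
next
  fix f g :: "'a \<Rightarrow> real" assume f: "lip_bs f" and g: "lip_bs g"
  show "AE x in m. der_add b s (\<lambda>y. f y + g y) x = der_add b s f x + der_add b s g x"
    using D_add_ax[OF assms(1) f g] D_add_ax[OF assms(2) f g]
    by eventually_elim (simp add: der_add_def algebra_simps)
  show "AE x in m. der_add b s (\<lambda>y. f y * g y) x = f x * der_add b s g x + g x * der_add b s f x"
    using D_leib_ax[OF assms(1) f g] D_leib_ax[OF assms(2) f g]
    by eventually_elim (simp add: der_add_def algebra_simps)
qed

lemma D_diff: assumes "D b" "D s" shows "D (der_diff b s)"
proof (rule D_intro)
  show "Bd (der_diff b s) (\<lambda>x. N b x + N s x)" using Bd_add N_bd assms by blast
  fix f :: "'a \<Rightarrow> real" assume f: "lip_bs f"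
  have "Lq m q (\<lambda>x. b f x + (-1) * s f x)" using f assms by (intro Lq_add Lq_cmult D_Lq)
  then show "Lq m q (der_diff b s f)" unfolding der_diff_def by simp
  fix c :: real
  show "AE x in m. der_diff b s (\<lambda>y. c * f y) x = c * der_diff b s f x"
    using D_mult_ax[OF assms(1) f, of c] D_mult_ax[OF assms(2) f, of c]
    by eventually_elim (simp add: der_diff_def algebra_simps)
next
  fix f g :: "'a \<Rightarrow> real" assume f: "lip_bs f" and g: "lip_bs g"
  show "AE x in m. der_diff b s (\<lambda>y. f y + g y) x = der_diff b s f x + der_diff b s g x"
    using D_add_ax[OF assms(1) f g] D_add_ax[OF assms(2) f g]
    by eventually_elim (simp add: der_diff_def algebra_simps)
  show "AE x in m. der_diff b s (\<lambda>y. f y * g y) x = f x * der_diff b s g x + g x * der_diff b s f x"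
    using D_leib_ax[OF assms(1) f g] D_leib_ax[OF assms(2) f g]
    by eventually_elim (simp add: der_diff_def algebra_simps)
qed

definition zero_der :: "('a \<Rightarrow> real) \<Rightarrow> 'a \<Rightarrow> real" where "zero_der = (\<lambda>f x. 0)"

lemma Bd_zero: "Bd zero_der (\<lambda>x. 0)"
  by (rule Bd_intro) (auto simp: Lq_zero zero_der_def)

lemma D_zero: "D zero_der"
  by (rule D_intro[OF _ _ _ _ Bd_zero]) (auto simp: Lq_zero zero_der_def)

lemma N_zero: "AE x in m. N zero_der x = 0"
  using N_min[OF D_zero Bd_zero] N_nn[OF D_zero] by eventually_elim simp

lemma tri_add: "D b \<Longrightarrow> D s \<Longrightarrow> AE x in m. N (der_add b s) x \<le> N b x + N s x"
  by (intro N_min D_add Bd_add N_bd)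

lemma tri_diff: "D b \<Longrightarrow> D s \<Longrightarrow> AE x in m. N (der_diff b s) x \<le> N b x + N s x"
  by (intro N_min D_diff Bd_add N_bd)

lemma add_diff_cancel_der: "der_add (der_diff b s) s = b"
  by (simp add: der_add_def der_diff_def)

lemma diff_add_der: "der_diff b (der_add s t) = der_diff (der_diff b s) t"
  by (simp add: der_add_def der_diff_def algebra_simps)

lemma diff_zero_der: "der_diff b zero_der = b"
  by (simp add: zero_der_def der_diff_def)

lemma N_zero_eq:
  assumes "D c" "AE x in m. N c x = 0"
  shows "der_eq m c zero_der"
  unfolding der_eq_def
proof (intro allI impI)
  fix f :: "'a \<Rightarrow> real" assume f: "lip_bs f"
  from N_le[OF assms(1) f] assms(2) show "AE x in m. c f x = zero_der f x"
    by eventually_elim (simp add: zero_der_def)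
qed

lemma sub_le:
  assumes "D b" "subderivation m q s b"
  shows "AE x in m. N s x \<le> N b x"
proof -
  have Ds: "D s" using assms by (simp add: subderivation_def)
  have "AE x in m. 0 \<le> N (der_diff b s) x" by (rule N_nn[OF D_diff[OF assms(1) Ds]])
  moreover have "AE x in m. N (der_diff b s) x + N s x \<le> N b x" using assms(2) by (simp add: subderivation_def)
  ultimately show ?thesis by eventually_elim simp
qed

lemma sub_diff_le:
  assumes "D b" "subderivation m q s b"
  shows "AE x in m. N (der_diff b s) x \<le> N b x - N s x"
proof -
  have "AE x in m. N (der_diff b s) x + N s x \<le> N b x" using assms(2) by (simp add: subderivation_def)
  then show ?thesis by eventually_elim simp
qed

lemma sub_trans:
  assumes Db: "D b" and ss: "subderivation m q s b" and st: "subderivation m q t (der_diff b s)"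
  shows "subderivation m q (der_add s t) b" "AE x in m. N (der_add s t) x = N s x + N t x"
proof -
  have Ds: "D s" using ss by (simp add: subderivation_def)
  have Dt: "D t" using st by (simp add: subderivation_def)
  have Dst: "D (der_add s t)" by (rule D_add[OF Ds Dt])
  have a1: "AE x in m. N (der_diff b s) x + N s x \<le> N b x" using ss by (simp add: subderivation_def)
  have a2: "AE x in m. N (der_diff b (der_add s t)) x + N t x \<le> N (der_diff b s) x"
    using st by (simp add: subderivation_def diff_add_der)
  have a3: "AE x in m. N (der_add s t) x \<le> N s x + N t x" by (rule tri_add[OF Ds Dt])
  have a4: "AE x in m. N b x \<le> N (der_diff b (der_add s t)) x + N (der_add s t) x"
    using tri_add[OF D_diff[OF Db Dst] Dst] by (simp add: add_diff_cancel_der)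
  have "AE x in m. N (der_diff b (der_add s t)) x + N (der_add s t) x \<le> N b x"
    using a1 a2 a3 by eventually_elim simp
  then show "subderivation m q (der_add s t) b"
    unfolding subderivation_def using Dst by simp
  show "AE x in m. N (der_add s t) x = N s x + N t x"
    using a1 a2 a3 a4 by eventually_elim simp
qed

lemma sub_zero: "D b \<Longrightarrow> subderivation m q zero_der b"
proof -
  have "AE x in m. N b x + N zero_der x \<le> N b x" using N_zero by eventually_elim simp
  then show ?thesis unfolding subderivation_def diff_zero_der using D_zero by simp
qed

lemma ZD_add: "zero_divergence m b \<Longrightarrow> zero_divergence m s \<Longrightarrow> zero_divergence m (der_add b s)"
  by (simp add: zero_divergence_def der_add_def)

lemma ZD_diff: "zero_divergence m b \<Longrightarrow> zero_divergence m s \<Longrightarrow> zero_divergence m (der_diff b s)"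
  by (simp add: zero_divergence_def der_diff_def)

lemma cycle_add: "is_cycle m q b \<Longrightarrow> is_cycle m q s \<Longrightarrow> is_cycle m q (der_add b s)"
  by (simp add: is_cycle_def D_add ZD_add)

lemma cycle_diff: "is_cycle m q b \<Longrightarrow> is_cycle m q s \<Longrightarrow> is_cycle m q (der_diff b s)"
  by (simp add: is_cycle_def D_diff ZD_diff)

lemma cycle_zero: "is_cycle m q zero_der"
  unfolding is_cycle_def by (intro conjI D_zero) (simp add: zero_divergence_def zero_der_def)

end

lemma abs_suminf_le:
  fixes f g :: "nat \<Rightarrow> real"
  assumes le: "\<And>n. \<bar>f n\<bar> \<le> g n" and sg: "summable g"
  shows "summable f" "\<bar>suminf f\<bar> \<le> suminf g"
proof -
  have nf: "norm (f n) \<le> g n" for n using le[of n] by simp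
  show sf: "summable f" by (rule summable_comparison_test'[OF sg nf])
  have f1: "f n \<le> g n" for n using le[of n] by linarith
  have f2: "- f n \<le> g n" for n using le[of n] by linarith
  have "suminf f \<le> suminf g" by (rule suminf_le[OF f1 sf sg])
  moreover have smf: "summable (\<lambda>n. - f n)" using sf by (rule summable_minus)
  have "suminf (\<lambda>n. - f n) \<le> suminf g" by (rule suminf_le[OF f2 smf sg])
  moreover have "suminf (\<lambda>n. - f n) = - suminf f" using sf by (rule suminf_minus)
  ultimately show "\<bar>suminf f\<bar> \<le> suminf g" by linarith
qed

locale mmsb = mmsq m q for m :: "'a::polish_space measure" and q +
  fixes b :: "('a \<Rightarrow> real) \<Rightarrow> 'a \<Rightarrow> real"
  assumes Db: "is_derivation m q b"
begin

definition w0 :: "'a \<Rightarrow> real" where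
  "w0 = (SOME w. integrable m w \<and> (\<forall>x. 0 < w x) \<and> w \<in> borel_measurable borel)"

lemma w0_all: "integrable m w0 \<and> (\<forall>x. 0 < w0 x) \<and> w0 \<in> borel_measurable borel"
proof -
  have "\<exists>w::'a \<Rightarrow> real. integrable m w \<and> (\<forall>x. 0 < w x) \<and> w \<in> borel_measurable borel"
  proof (rule weight)
    fix w :: "'a \<Rightarrow> real" assume w: "integrable m w" "\<And>x. 0 < w x" "w \<in> borel_measurable borel"
    show "\<exists>w::'a \<Rightarrow> real. integrable m w \<and> (\<forall>x. 0 < w x) \<and> w \<in> borel_measurable borel"
      by (rule exI[of _ w], intro conjI allI w)
  qed
  then show ?thesis unfolding w0_def by (rule someI_ex)
qed

lemma w0: "integrable m w0" "0 < w0 x" "w0 \<in> borel_measurable borel"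
  using w0_all by blast+

definition hh :: "'a \<Rightarrow> real" where "hh x = w0 x / (1 + \<bar>N b x\<bar>)"

lemma hh_pos: "0 < hh x"
proof -
  have "0 < 1 + \<bar>N b x\<bar>" by (rule add_pos_nonneg) auto
  then show ?thesis unfolding hh_def using w0(2)[of x] by (rule divide_pos_pos[rotated])
qed

lemma hh_meas: "hh \<in> borel_measurable borel"
proof -
  have "w0 \<in> borel_measurable borel" "N b \<in> borel_measurable borel"
    using w0(3) N_meas[OF Db] by auto
  then show ?thesis unfolding hh_def[abs_def] by simp
qed

definition \<Phi> :: "(('a \<Rightarrow> real) \<Rightarrow> 'a \<Rightarrow> real) \<Rightarrow> real" where
  "\<Phi> c = integral\<^sup>L m (\<lambda>x. N c x * hh x)"

lemma \<Phi>_int: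
  assumes "D c" "AE x in m. N c x \<le> N b x"
  shows "integrable m (\<lambda>x. N c x * hh x)"
proof (rule Bochner_Integration.integrable_bound[OF w0(1)])
  have [measurable]: "N c \<in> borel_measurable borel" "hh \<in> borel_measurable borel"
    using N_meas[OF assms(1)] hh_meas by auto
  have "(\<lambda>x. N c x * hh x) \<in> borel_measurable borel" by measurable
  then show "(\<lambda>x. N c x * hh x) \<in> borel_measurable m" by simp
  show "AE x in m. norm (N c x * hh x) \<le> norm (w0 x)"
    using assms(2) N_nn[OF assms(1)]
  proof eventually_elim
    case (elim x)
    have pos: "0 < 1 + \<bar>N b x\<bar>" by (simp add: add_pos_nonneg)
    have "N c x / (1 + \<bar>N b x\<bar>) \<le> 1" using elim pos by (simp add: divide_le_eq)
    then have "N c x / (1 + \<bar>N b x\<bar>) * w0 x \<le> 1 * w0 x" using w0(2)[of x] by (intro mult_right_mono) auto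
    moreover have "N c x * hh x = N c x / (1 + \<bar>N b x\<bar>) * w0 x" by (simp add: hh_def)
    moreover have "0 \<le> N c x * hh x" using elim hh_pos[of x] by simp
    ultimately show ?case using w0(2)[of x] by simp
  qed
qed

lemma \<Phi>_nn: assumes "D c" shows "0 \<le> \<Phi> c"
proof -
  have "AE x in m. 0 \<le> N c x * hh x" using N_nn[OF assms]
  proof eventually_elim
    case (elim x) then show ?case using hh_pos[of x] by simp
  qed
  then show ?thesis unfolding \<Phi>_def by (rule integral_nonneg_AE)
qed

lemma \<Phi>_mono:
  assumes "D c1" "D c2" "AE x in m. N c1 x \<le> N c2 x" "AE x in m. N c2 x \<le> N b x"
  shows "\<Phi> c1 \<le> \<Phi> c2"
proof -
  have "AE x in m. N c1 x \<le> N b x" using assms(3,4) by eventually_elim simp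
  then have i1: "integrable m (\<lambda>x. N c1 x * hh x)" by (rule \<Phi>_int[OF assms(1)])
  have i2: "integrable m (\<lambda>x. N c2 x * hh x)" by (rule \<Phi>_int[OF assms(2,4)])
  show ?thesis unfolding \<Phi>_def
  proof (rule integral_mono_AE[OF i1 i2])
    show "AE x in m. N c1 x * hh x \<le> N c2 x * hh x" using assms(3)
    proof eventually_elim
      case (elim x) then show ?case using hh_pos[of x] by (intro mult_right_mono) auto
    qed
  qed
qed

definition subcyc where "subcyc r c \<longleftrightarrow> is_cycle m q c \<and> subderivation m q c r"

lemma subcyc_D: "subcyc r c \<Longrightarrow> D c"
  by (simp add: subcyc_def subderivation_def)

lemma step_ex:
  assumes Dr: "D r" and rb: "AE x in m. N r x \<le> N b x"
  shows "\<exists>c. subcyc r c \<and> (\<forall>c'. subcyc r c' \<longrightarrow> \<Phi> c' \<le> 2 * \<Phi> c)"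
proof -
  define X where "X = \<Phi> ` {c. subcyc r c}"
  have z: "subcyc r zero_der" unfolding subcyc_def using cycle_zero sub_zero[OF Dr] by simp
  have Xne: "X \<noteq> {}" unfolding X_def using z by blast
  have le: "\<Phi> c' \<le> \<Phi> b" if "subcyc r c'" for c'
  proof (rule \<Phi>_mono[OF subcyc_D[OF that] Db])
    have "AE x in m. N c' x \<le> N r x" using sub_le[OF Dr] that by (simp add: subcyc_def)
    then show "AE x in m. N c' x \<le> N b x" using rb by eventually_elim simp
  qed simp
  have Xbdd: "bdd_above X"
  proof (rule bdd_aboveI[of _ "\<Phi> b"])
    fix v assume "v \<in> X"
    then obtain c' where "subcyc r c'" "v = \<Phi> c'" unfolding X_def by blast
    then show "v \<le> \<Phi> b" using le by simp
  qed
  have up: "\<Phi> c' \<le> Sup X" if "subcyc r c'" for c'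
  proof -
    have "\<Phi> c' \<in> X" unfolding X_def using that by blast
    then show ?thesis by (rule cSup_upper[OF _ Xbdd])
  qed
  show ?thesis
  proof (cases "Sup X \<le> 0")
    case True
    show ?thesis
    proof (intro exI conjI allI impI)
      show "subcyc r zero_der" by (rule z)
      fix c' assume "subcyc r c'"
      then have "\<Phi> c' \<le> 0" using up[of c'] True by linarith
      moreover have "0 \<le> \<Phi> zero_der" by (rule \<Phi>_nn[OF D_zero])
      ultimately show "\<Phi> c' \<le> 2 * \<Phi> zero_der" by linarith
    qed
  next
    case False
    then have "Sup X / 2 < Sup X" by simp
    then obtain v where "v \<in> X" "Sup X / 2 < v" using less_cSupD[OF Xne] by blast
    then obtain c where c: "subcyc r c" "Sup X / 2 < \<Phi> c" unfolding X_def by blast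
    show ?thesis
    proof (intro exI conjI allI impI)
      show "subcyc r c" by (rule c(1))
      fix c' assume "subcyc r c'"
      then have "\<Phi> c' \<le> Sup X" by (rule up)
      then show "\<Phi> c' \<le> 2 * \<Phi> c" using c(2) by linarith
    qed
  qed
qed

definition step where
  "step s = (SOME c. subcyc (der_diff b s) c \<and> (\<forall>c'. subcyc (der_diff b s) c' \<longrightarrow> \<Phi> c' \<le> 2 * \<Phi> c))"

definition S :: "nat \<Rightarrow> ('a \<Rightarrow> real) \<Rightarrow> 'a \<Rightarrow> real" where
  "S = rec_nat zero_der (\<lambda>n s. der_add s (step s))"

definition C :: "nat \<Rightarrow> ('a \<Rightarrow> real) \<Rightarrow> 'a \<Rightarrow> real" where "C n = step (S n)"

lemma S0: "S 0 = zero_der" and SS: "S (Suc n) = der_add (S n) (C n)"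
  by (simp_all add: S_def C_def)

definition P :: "nat \<Rightarrow> 'a \<Rightarrow> real" where "P n x = (\<Sum>j<n. N (C j) x)"

lemma step_good:
  assumes "subderivation m q s b"
  shows "subcyc (der_diff b s) (step s) \<and> (\<forall>c'. subcyc (der_diff b s) c' \<longrightarrow> \<Phi> c' \<le> 2 * \<Phi> (step s))"
proof -
  have Ds: "D s" using assms by (simp add: subderivation_def)
  have Dr: "D (der_diff b s)" by (rule D_diff[OF Db Ds])
  have "AE x in m. N (der_diff b s) x \<le> N b x - N s x" by (rule sub_diff_le[OF Db assms])
  then have "AE x in m. N (der_diff b s) x \<le> N b x" using N_nn[OF Ds] by eventually_elim simp
  from step_ex[OF Dr this] show ?thesis unfolding step_def by (rule someI_ex)
qed

lemma inv:
  "is_cycle m q (S n) \<and> subderivation m q (S n) b \<and> (AE x in m. N (S n) x = P n x)"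
proof (induction n)
  case 0
  show ?case using cycle_zero sub_zero[OF Db] N_zero by (simp add: S0 P_def)
next
  case (Suc n)
  have g: "subcyc (der_diff b (S n)) (C n)" using step_good Suc by (simp add: C_def)
  have ss: "subderivation m q (S n) b" using Suc by blast
  have gt: "subderivation m q (C n) (der_diff b (S n))" using g by (simp add: subcyc_def)
  note st = sub_trans[OF Db ss gt]
  have cS: "is_cycle m q (S n)" using Suc by blast
  have cC: "is_cycle m q (C n)" using g by (simp add: subcyc_def)
  have cy: "is_cycle m q (der_add (S n) (C n))" by (rule cycle_add[OF cS cC])
  have e: "AE x in m. N (S n) x = P n x" using Suc by blast
  have "AE x in m. N (S (Suc n)) x = P (Suc n) x" using st(2) e
    by eventually_elim (simp add: SS P_def)
  then show ?case using st(1) cy by (simp add: SS)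
qed

lemma C_good: "subcyc (der_diff b (S n)) (C n)" "\<And>c'. subcyc (der_diff b (S n)) c' \<Longrightarrow> \<Phi> c' \<le> 2 * \<Phi> (C n)"
  using step_good[of "S n"] inv[of n] by (auto simp: C_def)

lemma DS: "D (S n)" using inv[of n] by (simp add: is_cycle_def)
lemma DC: "D (C n)" using C_good(1) subcyc_D by blast

lemma C_le_b: "AE x in m. N (C n) x \<le> N b x"
proof -
  have "AE x in m. N (C n) x \<le> N (der_diff b (S n)) x"
    using sub_le[OF D_diff[OF Db DS]] C_good(1) by (simp add: subcyc_def)
  moreover have "AE x in m. N (der_diff b (S n)) x \<le> N b x - N (S n) x"
    using sub_diff_le[OF Db] inv by blast
  ultimately show ?thesis using N_nn[OF DS[of n]] by eventually_elim simp
qed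

end

context mmsb begin

definition GG :: "'a \<Rightarrow> real" where "GG x = (\<Sum>j. N (C j) x)"
definition cc :: "('a \<Rightarrow> real) \<Rightarrow> 'a \<Rightarrow> real" where "cc = (\<lambda>f x. \<Sum>j. C j f x)"

definition gd :: "'a \<Rightarrow> bool" where
  "gd x \<longleftrightarrow> (\<forall>n. N (S n) x = P n x) \<and> (\<forall>n. 0 \<le> N (C n) x) \<and> (\<forall>n. N (S n) x \<le> N b x) \<and> 0 \<le> N b x"

lemma gd_AE: "AE x in m. gd x"
proof -
  have a: "AE x in m. \<forall>n. N (S n) x = P n x" unfolding AE_all_countable using inv by blast
  have b: "AE x in m. \<forall>n. 0 \<le> N (C n) x" unfolding AE_all_countable using N_nn[OF DC] by blast
  have c: "AE x in m. \<forall>n. N (S n) x \<le> N b x" unfolding AE_all_countable using sub_le[OF Db] inv by blast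
  have d: "AE x in m. 0 \<le> N b x" using N_nn[OF Db] .
  from a b c d show ?thesis unfolding gd_def by eventually_elim blast
qed

lemma gd_props:
  assumes "gd x"
  shows "summable (\<lambda>j. N (C j) x)" "GG x \<le> N b x" "\<And>k. P k x \<le> GG x" "(\<lambda>k. P k x) \<longlonglongrightarrow> GG x"
    "0 \<le> GG x" "\<And>k. N (S k) x = P k x" "\<And>k. 0 \<le> N (C k) x" "0 \<le> N b x"
proof -
  have nn: "\<And>n. 0 \<le> N (C n) x" using assms by (simp add: gd_def)
  have le: "\<And>n. (\<Sum>j<n. N (C j) x) \<le> N b x" using assms by (auto simp: gd_def P_def)
  show sm: "summable (\<lambda>j. N (C j) x)" by (rule summableI_nonneg_bounded[OF nn le])
  show "GG x \<le> N b x" unfolding GG_def by (rule suminf_le_const[OF sm le])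
  show Pk: "P k x \<le> GG x" for k unfolding GG_def P_def
    by (rule sum_le_suminf[OF sm]) (auto simp: nn)
  show "(\<lambda>k. P k x) \<longlonglongrightarrow> GG x" unfolding GG_def P_def by (rule summable_LIMSEQ[OF sm])
  have "0 \<le> P 0 x" by (simp add: P_def)
  then show "0 \<le> GG x" using Pk[of 0] by linarith
  show "\<And>k. N (S k) x = P k x" "\<And>k. 0 \<le> N (C k) x" "0 \<le> N b x" using assms by (auto simp: gd_def)
qed

lemma S_sum: "S n f x = (\<Sum>j<n. C j f x)"
  by (induction n) (simp_all add: S0 SS zero_der_def der_add_def)

lemma Cf_AE: "lip_bs f \<Longrightarrow> AE x in m. \<forall>j. \<bar>C j f x\<bar> \<le> N (C j) x * lip_a f x"
  unfolding AE_all_countable using N_le[OF DC] by blast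

definition cvf where
  "cvf f x \<longleftrightarrow> summable (\<lambda>j. C j f x) \<and> \<bar>cc f x\<bar> \<le> GG x * lip_a f x \<and>
     (\<forall>k. \<bar>cc f x - S k f x\<bar> \<le> (GG x - P k x) * lip_a f x) \<and> (\<lambda>n. S n f x) \<longlonglongrightarrow> cc f x"

lemma conv_pt:
  assumes g: "gd x" and l: "0 \<le> lip_a f x" and Cf: "\<forall>j. \<bar>C j f x\<bar> \<le> N (C j) x * lip_a f x"
  shows "cvf f x"
proof -
  define l where "l = lip_a f x"
  have sm: "summable (\<lambda>j. N (C j) x)" by (rule gd_props(1)[OF g])
  have sN: "summable (\<lambda>j. N (C j) x * l)" by (rule summable_mult2[OF sm])
  have Cf': "\<And>j. \<bar>C j f x\<bar> \<le> N (C j) x * l" using Cf by (simp add: l_def)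
  have sC: "summable (\<lambda>j. C j f x)" by (rule abs_suminf_le(1)[OF Cf' sN])
  have "\<bar>cc f x\<bar> \<le> (\<Sum>j. N (C j) x * l)" unfolding cc_def by (rule abs_suminf_le(2)[OF Cf' sN])
  also have "\<dots> = GG x * l" unfolding GG_def by (rule suminf_mult2[OF sm, symmetric])
  finally have b1: "\<bar>cc f x\<bar> \<le> GG x * l" .
  have tail: "\<bar>cc f x - S k f x\<bar> \<le> (GG x - P k x) * l" for k
  proof -
    have e1: "cc f x - S k f x = (\<Sum>j. C (j + k) f x)"
      unfolding cc_def S_sum using suminf_minus_initial_segment[OF sC, of k] by simp
    have Cf'': "\<And>j. \<bar>C (j + k) f x\<bar> \<le> N (C (j + k)) x * l" by (rule Cf')
    have sN': "summable (\<lambda>j. N (C (j + k)) x * l)" by (rule summable_ignore_initial_segment[OF sN])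
    have "\<bar>\<Sum>j. C (j + k) f x\<bar> \<le> (\<Sum>j. N (C (j + k)) x * l)" by (rule abs_suminf_le(2)[OF Cf'' sN'])
    also have "\<dots> = (\<Sum>j. N (C (j + k)) x) * l"
      by (rule suminf_mult2[OF summable_ignore_initial_segment[OF sm], symmetric])
    also have "(\<Sum>j. N (C (j + k)) x) = GG x - P k x"
      unfolding GG_def P_def by (rule suminf_minus_initial_segment[OF sm])
    finally show ?thesis using e1 by simp
  qed
  have lim: "(\<lambda>n. S n f x) \<longlonglongrightarrow> cc f x" unfolding S_sum cc_def by (rule summable_LIMSEQ[OF sC])
  show ?thesis unfolding cvf_def using sC b1 tail lim by (simp add: l_def)
qed

lemma conv_AE: "lip_bs f \<Longrightarrow> AE x in m. cvf f x"
proof -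
  assume f: "lip_bs f"
  from gd_AE Cf_AE[OF f] show ?thesis
  proof eventually_elim
    case (elim x) then show ?case using conv_pt lip_a_nn[OF f] by blast
  qed
qed

lemma Cf_meas: "lip_bs f \<Longrightarrow> C j f \<in> borel_measurable borel"
  by (rule D_meas[OF DC])

lemma cc_meas: "lip_bs f \<Longrightarrow> cc f \<in> borel_measurable borel"
proof -
  assume f: "lip_bs f"
  have [measurable]: "\<And>j. C j f \<in> borel_measurable borel" using Cf_meas[OF f] .
  show ?thesis unfolding cc_def by measurable
qed

lemma GG_meas: "GG \<in> borel_measurable borel"
proof -
  have [measurable]: "\<And>j. N (C j) \<in> borel_measurable borel" using N_meas[OF DC] .
  show ?thesis unfolding GG_def[abs_def] by measurable
qed

lemma P_meas: "P k \<in> borel_measurable borel"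
proof -
  have [measurable]: "\<And>j. N (C j) \<in> borel_measurable borel" using N_meas[OF DC] .
  show ?thesis unfolding P_def[abs_def] by measurable
qed

lemma Lq_GG: "Lq m q GG"
proof (rule Lq_mono[OF N_Lq[OF Db] GG_meas])
  show "AE x in m. \<bar>GG x\<bar> \<le> \<bar>N b x\<bar>" using gd_AE
  proof eventually_elim
    case (elim x) then show ?case using gd_props[OF elim] by simp
  qed
qed

lemma Bd_cc: "Bd cc GG"
proof (rule Bd_intro[OF Lq_GG])
  show "AE x in m. 0 \<le> GG x" using gd_AE by eventually_elim (rule gd_props(5))
  fix f :: "'a \<Rightarrow> real" assume "lip_bs f"
  from conv_AE[OF this] show "AE x in m. \<bar>cc f x\<bar> \<le> GG x * lip_a f x"
    by eventually_elim (simp add: cvf_def)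
qed

lemma D_cc: "D cc"
proof (rule D_intro[OF _ _ _ _ Bd_cc])
  fix f :: "'a \<Rightarrow> real" assume f: "lip_bs f"
  obtain L where L: "0 \<le> L" "\<forall>x. 0 \<le> lip_a f x \<and> lip_a f x \<le> L \<and> (x \<notin> supp1 f \<longrightarrow> lip_a f x = 0)"
    using lip_a_ex[OF f] by blast
  show "Lq m q (cc f)"
  proof (rule Lq_mono[OF Lq_cmult[OF N_Lq[OF Db], of L] cc_meas[OF f]])
    show "AE x in m. \<bar>cc f x\<bar> \<le> \<bar>L * N b x\<bar>" using gd_AE conv_AE[OF f]
    proof eventually_elim
      case (elim x)
      have a: "\<bar>cc f x\<bar> \<le> GG x * lip_a f x" using elim by (simp add: cvf_def)
      have "GG x * lip_a f x \<le> N b x * L"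
        using gd_props[OF elim(1)] L by (intro mult_mono) auto
      then show ?case using a gd_props(8)[OF elim(1)] L(1) by (simp add: abs_mult mult.commute)
    qed
  qed
  fix c :: real
  have "AE x in m. \<forall>j. C j (\<lambda>y. c * f y) x = c * C j f x"
    unfolding AE_all_countable using D_mult_ax[OF DC f] by blast
  then show "AE x in m. cc (\<lambda>y. c * f y) x = c * cc f x" using conv_AE[OF f]
  proof eventually_elim
    case (elim x)
    then show ?case unfolding cc_def using suminf_mult[of "\<lambda>j. C j f x" c] by (simp add: cvf_def)
  qed
next
  fix f g :: "'a \<Rightarrow> real" assume f: "lip_bs f" and g: "lip_bs g"
  have "AE x in m. \<forall>j. C j (\<lambda>y. f y + g y) x = C j f x + C j g x"
    unfolding AE_all_countable using D_add_ax[OF DC f g] by blast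
  then show "AE x in m. cc (\<lambda>y. f y + g y) x = cc f x + cc g x" using conv_AE[OF f] conv_AE[OF g]
  proof eventually_elim
    case (elim x)
    then show ?case unfolding cc_def using suminf_add[of "\<lambda>j. C j f x" "\<lambda>j. C j g x"] by (simp add: cvf_def)
  qed
  have "AE x in m. \<forall>j. C j (\<lambda>y. f y * g y) x = f x * C j g x + g x * C j f x"
    unfolding AE_all_countable using D_leib_ax[OF DC f g] by blast
  then show "AE x in m. cc (\<lambda>y. f y * g y) x = f x * cc g x + g x * cc f x" using conv_AE[OF f] conv_AE[OF g]
  proof eventually_elim
    case (elim x)
    have s1: "summable (\<lambda>j. C j f x)" "summable (\<lambda>j. C j g x)" using elim by (auto simp: cvf_def)
    have "(\<Sum>j. f x * C j g x + g x * C j f x) = (\<Sum>j. f x * C j g x) + (\<Sum>j. g x * C j f x)"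
      using suminf_add[OF summable_mult[OF s1(2)] summable_mult[OF s1(1)]] by simp
    also have "\<dots> = f x * (\<Sum>j. C j g x) + g x * (\<Sum>j. C j f x)"
      using suminf_mult[OF s1(2)] suminf_mult[OF s1(1)] by simp
    finally show ?case unfolding cc_def using elim by simp
  qed
qed

lemma ZD_cc: "zero_divergence m cc"
  unfolding zero_divergence_def
proof (intro allI impI)
  fix f :: "'a \<Rightarrow> real" assume f: "lip_bs f"
  obtain L where L: "0 \<le> L" "\<forall>x. 0 \<le> lip_a f x \<and> lip_a f x \<le> L \<and> (x \<notin> supp1 f \<longrightarrow> lip_a f x = 0)"
    using lip_a_ex[OF f] by blast
  define W where "W x = L * N b x * indicator (supp1 f) x" for x
  have Bb: "supp1 f \<in> sets borel" using supp1_open by (rule borel_open)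
  have intW: "integrable m W"
    unfolding W_def
    by (rule Lq_integrable[OF Lq_cmult[OF N_Lq[OF Db]] Bb emeasure_bdd[OF supp1_bounded[OF f] Bb]])
  have bnd: "AE x in m. norm (S i f x) \<le> W x" for i
    using N_le[OF DS f, of i] gd_AE
  proof eventually_elim
    case (elim x)
    have l0: "0 \<le> lip_a f x" using L by blast
    have "\<bar>S i f x\<bar> \<le> N (S i) x * lip_a f x" by (rule elim(1))
    also have "\<dots> \<le> N b x * lip_a f x"
      using gd_props[OF elim(2)] l0 elim(2) unfolding gd_def by (intro mult_right_mono) auto
    also have "\<dots> \<le> W x"
    proof (cases "x \<in> supp1 f")
      case True
      have "lip_a f x \<le> L" using L by blast
      then have "N b x * lip_a f x \<le> N b x * L" using gd_props(8)[OF elim(2)] by (rule mult_left_mono)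
      then show ?thesis unfolding W_def using True by (simp add: ac_simps)
    next
      case False
      then show ?thesis unfolding W_def using L by simp
    qed
    finally show ?case by simp
  qed
  have lim: "AE x in m. (\<lambda>i. S i f x) \<longlonglongrightarrow> cc f x" using conv_AE[OF f] by eventually_elim (simp add: cvf_def)
  have ccm: "cc f \<in> borel_measurable m" using cc_meas[OF f] by simp
  have Sm: "S i f \<in> borel_measurable m" for i using D_meas[OF DS f] by simp
  have intcc: "integrable m (cc f)" by (rule integrable_dominated_convergence[OF ccm Sm intW lim bnd])
  have "(\<lambda>i. integral\<^sup>L m (S i f)) \<longlonglongrightarrow> integral\<^sup>L m (cc f)"
    by (rule integral_dominated_convergence[OF ccm Sm intW lim bnd])
  moreover have "integral\<^sup>L m (S i f) = 0" for i
    using inv[of i] f by (simp add: is_cycle_def zero_divergence_def)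
  ultimately have "(\<lambda>i. 0) \<longlonglongrightarrow> integral\<^sup>L m (cc f)" by simp
  then have "integral\<^sup>L m (cc f) = 0" using LIMSEQ_unique tendsto_const by blast
  then show "integrable m (cc f) \<and> integral\<^sup>L m (cc f) = 0" using intcc by simp
qed

lemma cycle_cc: "is_cycle m q cc"
  unfolding is_cycle_def using D_cc ZD_cc by simp

end

context mmsb begin

definition T :: "nat \<Rightarrow> ('a \<Rightarrow> real) \<Rightarrow> 'a \<Rightarrow> real" where "T k = der_diff cc (S k)"
definition aa :: "('a \<Rightarrow> real) \<Rightarrow> 'a \<Rightarrow> real" where "aa = der_diff b cc"

lemma DT: "D (T k)" unfolding T_def by (rule D_diff[OF D_cc DS])

lemma cycT: "is_cycle m q (T k)"
  unfolding T_def using cycle_diff[OF cycle_cc] inv by blast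

lemma subS: "subderivation m q (S k) b" using inv by blast

lemma Bd_T: "Bd (T k) (\<lambda>x. GG x - P k x)"
proof (rule Bd_intro)
  have m1: "(\<lambda>x. GG x - P k x) \<in> borel_measurable borel" using GG_meas P_meas[of k] by simp
  show "Lq m q (\<lambda>x. GG x - P k x)"
  proof (rule Lq_mono[OF N_Lq[OF Db] m1])
    show "AE x in m. \<bar>GG x - P k x\<bar> \<le> \<bar>N b x\<bar>" using gd_AE
    proof eventually_elim
      case (elim x)
      have "0 \<le> P k x" unfolding P_def using gd_props(7)[OF elim] by (simp add: sum_nonneg)
      moreover have "P k x \<le> GG x" "GG x \<le> N b x" using gd_props(2,3)[OF elim] by auto
      ultimately have "0 \<le> GG x - P k x" "GG x - P k x \<le> N b x" by linarith+
      then show ?case by simp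
    qed
  qed
  show "AE x in m. 0 \<le> GG x - P k x" using gd_AE
  proof eventually_elim
    case (elim x) then show ?case using gd_props(3)[OF elim, of k] by simp
  qed
  fix f :: "'a \<Rightarrow> real" assume "lip_bs f"
  from conv_AE[OF this] show "AE x in m. \<bar>T k f x\<bar> \<le> (GG x - P k x) * lip_a f x"
    by eventually_elim (simp add: cvf_def T_def der_diff_def)
qed

lemma NT: "AE x in m. N (T k) x \<le> GG x - P k x" by (rule N_min[OF DT Bd_T])
lemma Ncc: "AE x in m. N cc x \<le> GG x" by (rule N_min[OF D_cc Bd_cc])

lemma aa_eq: "aa = der_diff (der_diff b (S k)) (T k)"
  by (simp add: aa_def T_def der_diff_def)

lemma b_aa: "der_diff b aa = cc"
  by (simp add: aa_def der_diff_def)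

lemma Nbs: "AE x in m. N (der_diff b (S k)) x \<le> N b x - P k x"
  using sub_diff_le[OF Db subS[of k]] gd_AE
proof eventually_elim
  case (elim x) then show ?case using gd_props(6)[OF elim(2)] by simp
qed

lemma Nbs2: "AE x in m. N b x - P k x \<le> N (der_diff b (S k)) x"
  using tri_add[OF D_diff[OF Db DS[of k]] DS[of k]] gd_AE
proof eventually_elim
  case (elim x) then show ?case using gd_props(6)[OF elim(2)] by (simp add: add_diff_cancel_der)
qed

lemma Da: "D aa" unfolding aa_def by (rule D_diff[OF Db D_cc])

lemma Naa_k: "AE x in m. N aa x \<le> N b x - 2 * P k x + GG x"
  using tri_diff[OF D_diff[OF Db DS] DT, of k k] Nbs[of k] NT[of k]
proof eventually_elim
  case (elim x) then show ?case by (simp add: aa_eq[of k, symmetric])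
qed

lemma Naa: "AE x in m. N aa x \<le> N b x - GG x"
proof -
  have "AE x in m. \<forall>k. N aa x \<le> N b x - 2 * P k x + GG x" unfolding AE_all_countable using Naa_k by blast
  then show ?thesis using gd_AE
  proof eventually_elim
    case (elim x)
    have "(\<lambda>k. N b x - 2 * P k x + GG x) \<longlonglongrightarrow> N b x - 2 * GG x + GG x"
      using gd_props(4)[OF elim(2)] by (intro tendsto_intros)
    then have "N aa x \<le> N b x - 2 * GG x + GG x" by (rule LIMSEQ_le_const) (use elim(1) in blast)
    then show ?case by simp
  qed
qed

lemma sub_aa: "subderivation m q aa b"
  unfolding subderivation_def b_aa
proof (intro conjI Da)
  show "AE x in m. N cc x + N aa x \<le> N b x" using Ncc Naa by eventually_elim simp
qed

lemma sub_T: "subderivation m q (T k) (der_diff b (S k))"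
  unfolding subderivation_def aa_eq[of k, symmetric]
proof (intro conjI DT)
  show "AE x in m. N aa x + N (T k) x \<le> N (der_diff b (S k)) x"
    using Naa NT[of k] Nbs2[of k] by eventually_elim simp
qed

lemma Phi_S: "(\<Sum>k<n. \<Phi> (C k)) \<le> \<Phi> b"
proof -
  have int: "integrable m (\<lambda>x. N (C k) x * hh x)" for k by (rule \<Phi>_int[OF DC C_le_b])
  have "(\<Sum>k<n. \<Phi> (C k)) = integral\<^sup>L m (\<lambda>x. \<Sum>k<n. N (C k) x * hh x)"
    unfolding \<Phi>_def by (rule Bochner_Integration.integral_sum[where I="{..<n}" and M=m and f="\<lambda>k x. N (C k) x * hh x", symmetric]) (rule int)
  also have "\<dots> = \<Phi> (S n)"
    unfolding \<Phi>_def
  proof (rule integral_cong_AE)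
    show "(\<lambda>x. \<Sum>k<n. N (C k) x * hh x) \<in> borel_measurable m"
      using int by (intro borel_measurable_sum) (simp add: borel_measurable_integrable)
    show "(\<lambda>x. N (S n) x * hh x) \<in> borel_measurable m" using N_meas[OF DS] hh_meas by simp
    show "AE x in m. (\<Sum>k<n. N (C k) x * hh x) = N (S n) x * hh x" using gd_AE
    proof eventually_elim
      case (elim x) then show ?case using gd_props(6)[OF elim] by (simp add: P_def sum_distrib_right)
    qed
  qed
  also have "\<dots> \<le> \<Phi> b" by (rule \<Phi>_mono[OF DS Db sub_le[OF Db subS]]) simp
  finally show ?thesis .
qed

lemma acyc: "acyclic_der m q aa"
  unfolding acyclic_der_def
proof (intro allI impI)
  fix c' assume c': "is_cycle m q c' \<and> subderivation m q c' aa"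
  have Dc': "D c'" using c' by (simp add: is_cycle_def)
  have e1: "AE x in m. N c' x \<le> N aa x" using sub_le[OF Da] c' by blast
  have e2: "AE x in m. N aa x \<le> N b x" by (rule sub_le[OF Db sub_aa])
  have Nc'b: "AE x in m. N c' x \<le> N b x" using e1 e2 by eventually_elim simp
  have key: "\<Phi> c' \<le> 2 * \<Phi> (C k)" for k
  proof -
    have Dr: "D (der_diff b (S k))" by (rule D_diff[OF Db DS])
    have sc: "subderivation m q c' (der_diff (der_diff b (S k)) (T k))" using c' aa_eq[of k] by simp
    note st = sub_trans[OF Dr sub_T sc]
    have sub: "subcyc (der_diff b (S k)) (der_add (T k) c')"
      unfolding subcyc_def using st(1) cycle_add[OF cycT] c' by simp
    have "\<Phi> c' \<le> \<Phi> (der_add (T k) c')"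
    proof (rule \<Phi>_mono[OF Dc' D_add[OF DT Dc']])
      show "AE x in m. N c' x \<le> N (der_add (T k) c') x" using st(2) N_nn[OF DT[of k]]
        by eventually_elim simp
      show "AE x in m. N (der_add (T k) c') x \<le> N b x"
        using sub_le[OF Dr st(1)] Nbs[of k] gd_AE
      proof eventually_elim
        case (elim x)
        have "0 \<le> P k x" unfolding P_def using gd_props(7)[OF elim(3)] by (simp add: sum_nonneg)
        then show ?case using elim(1,2) by simp
      qed
    qed
    also have "\<dots> \<le> 2 * \<Phi> (C k)" by (rule C_good(2)[OF sub])
    finally show ?thesis .
  qed
  have nle: "real n * \<Phi> c' \<le> 2 * \<Phi> b" for n
  proof -
    have "real n * \<Phi> c' = (\<Sum>k<n. \<Phi> c')" by simp
    also have "\<dots> \<le> (\<Sum>k<n. 2 * \<Phi> (C k))" by (rule sum_mono) (rule key)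
    also have "\<dots> = 2 * (\<Sum>k<n. \<Phi> (C k))" by (simp add: sum_distrib_left)
    also have "\<dots> \<le> 2 * \<Phi> b" using Phi_S[of n] by simp
    finally show ?thesis .
  qed
  have "\<Phi> c' \<le> 0"
  proof (rule ccontr)
    assume "\<not> \<Phi> c' \<le> 0"
    then have "0 < \<Phi> c'" by simp
    then obtain n where "2 * \<Phi> b < real n * \<Phi> c'" using reals_Archimedean3 by blast
    then show False using nle[of n] by simp
  qed
  then have z: "\<Phi> c' = 0" using \<Phi>_nn[OF Dc'] by simp
  have intc: "integrable m (\<lambda>x. N c' x * hh x)" by (rule \<Phi>_int[OF Dc' Nc'b])
  have nnc: "AE x in m. 0 \<le> N c' x * hh x" using N_nn[OF Dc']
  proof eventually_elim
    case (elim x) then show ?case using hh_pos[of x] by simp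
  qed
  have "AE x in m. N c' x * hh x = 0" using z integral_nonneg_eq_0_iff_AE[OF intc nnc] by (simp add: \<Phi>_def)
  then have "AE x in m. N c' x = 0"
  proof eventually_elim
    case (elim x) then show ?case using hh_pos[of x] by simp
  qed
  from N_zero_eq[OF Dc' this] show "der_eq m c' (\<lambda>f x. 0)" by (simp add: zero_der_def)
qed

lemma main: "\<exists>a c. is_cycle m q c \<and> is_derivation m q a \<and> subderivation m q a b \<and>
           acyclic_der m q a \<and> der_eq m b (der_add a c)"
proof (intro exI conjI)
  show "is_cycle m q cc" by (rule cycle_cc)
  show "D aa" by (rule Da)
  show "subderivation m q aa b" by (rule sub_aa)
  show "acyclic_der m q aa" by (rule acyc)
  show "der_eq m b (der_add aa cc)" unfolding aa_def add_diff_cancel_der der_eq_def by simp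
qed

end

theorem proposition4p20:
  fixes m :: "'a::polish_space measure" and q :: ennreal
    and b :: "('a \<Rightarrow> real) \<Rightarrow> 'a \<Rightarrow> real"
  assumes "mms m" and "1 \<le> q" and "is_derivation m q b"
  shows "\<exists>a c. is_cycle m q c \<and> is_derivation m q a \<and> subderivation m q a b \<and>
           acyclic_der m q a \<and> der_eq m b (der_add a c)"
proof -
  interpret mmsb m q b
    by (rule mmsb.intro[OF mmsq.intro[OF assms(1,2)] mmsb_axioms.intro[OF assms(3)]])
  show ?thesis by (rule main)
qed

end
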